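(* Under the standing setup with Assumptions 1 and 2, let $c^*$ be the optimal consumption function. Then both $w\mapsto c^*(w,z)$ and $w\mapsto i^*(w,z):=w-c^*(w,z)$ are increasing on $(0,\infty)$ for each $z\in\mathsf Z$.
   Context: Standing setup. $\mathsf Z$ finite, $\{Z_t\}$ a time-homogeneous Markov chain on $\mathsf Z$ with transition probabilities $P(z,\hat z)$; $\{\epsilon_t\}_{t\ge1}$ i.i.d. with distribution $\pi$, independent of $\{Z_t\}$; for nonnegative measurable $\beta,R,Y$, $\beta_t=\beta(Z_{t-1},Z_t,\epsilon_t)$, $R_t=R(Z_{t-1},Z_t,\epsilon_t)$, $Y_t=Y(Z_{t-1},Z_t,\epsilon_t)$. $u:(0,\infty)\times\mathsf Z\to\mathbb R$ with derivative $u'(c,z)$ in $c$. $\mathbb E_z$: expectation given $Z_0=z$; under $\mathbb E_z$, $\hat Z=Z_1$, $\hat\beta=\beta(z,\hat Z,\epsilon_1)$, $\hat R=R(z,\hat Z,\epsilon_1)$, $\hat Y=Y(z,\hat Z,\epsilon_1)$. $S_0=(0,\infty)\times\mathsf Z$. Assumption 1: for every $z$, $u(\cdot,z)$ twice differentiable on $(0,\infty)$, $u'>0$, $u''<0$, $u'(c,z)\to\infty$ as $c\to0$, $\lim_{c\to\infty}u'(c,z)<1$. Assumption 2: (a) $\mathbb E_zu'(\hat Y,\hat Z)<\infty$ and $\mathbb E_z\hat\beta\hat Ru'(\hat Y,\hat Z)<\infty$ for all $z$; (b) $r(K(1))<1$ ($r$ = spectral radius), where $K_{z\hat z}(\theta)=P(z,\hat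 z)\int\beta(z,\hat z,\epsilon)R(z,\hat z,\epsilon)^\theta\pi(d\epsilon)$. $\mathcal C$: continuous $c:S_0\to\mathbb R_+$, increasing in $w$, $0<c(w,z)\le w$, with $\sup_{S_0}|u'(c(w,z),z)-u'(w,z)|<\infty$. $T$: $Tc(w,z)$ is the unique $\xi\in(0,w]$ with $u'(\xi,z)=\max\{\mathbb E_z\hat\beta\hat Ru'(c(\hat R(w-\xi)+\hat Y,\hat Z),\hat Z),u'(w,z)\}$. The optimal consumption function $c^*$ is the unique fixed point of $T$ in $\mathcal C$. *)

theory Defs
  imports "HOL-Probability.Probability"
begin

definition condE :: "('z::finite \<Rightarrow> 'z \<Rightarrow> real) \<Rightarrow> 'e measure \<Rightarrow> 'z \<Rightarrow> ('z \<Rightarrow> 'e \<Rightarrow> ennreal) \<Rightarrow> ennreal" where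
  "condE P Pe z g = (\<Sum>zh\<in>UNIV. ennreal (P z zh) * (\<integral>\<^sup>+ e. g zh e \<partial>Pe))"

text \<open>Marginal utility extended to [0,infinity]: u'(x,z) for x>0, and +infinity for x \<le> 0
  (the limit as c -> 0 under Assumption 1).\<close>
definition mu :: "(real \<Rightarrow> 'z \<Rightarrow> real) \<Rightarrow> real \<Rightarrow> 'z \<Rightarrow> ennreal" where
  "mu du x z = (if 0 < x then ennreal (du x z) else \<infinity>)"

text \<open>A consumption function is only defined on S_0 = (0,infinity) x Z; off S_0 we send it to 0.\<close>
definition cext :: "(real \<Rightarrow> 'z \<Rightarrow> real) \<Rightarrow> real \<Rightarrow> 'z \<Rightarrow> real" where
  "cext c x z = (if 0 < x then c x z else 0)"

definition classC :: "(real \<Rightarrow> 'z \<Rightarrow> real) \<Rightarrow> (real \<Rightarrow> 'z \<Rightarrow> real) set" where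
  "classC du = {c. (\<forall>z. continuous_on {0<..} (\<lambda>w. c w z))
      \<and> (\<forall>z. mono_on {0<..} (\<lambda>w. c w z))
      \<and> (\<forall>w>0. \<forall>z. 0 < c w z \<and> c w z \<le> w)
      \<and> (\<exists>M. \<forall>w>0. \<forall>z. \<bar>du (c w z) z - du w z\<bar> \<le> M)}"

definition Top :: "('z::finite \<Rightarrow> 'z \<Rightarrow> real) \<Rightarrow> 'e measure \<Rightarrow>
    ('z \<Rightarrow> 'z \<Rightarrow> 'e \<Rightarrow> real) \<Rightarrow> ('z \<Rightarrow> 'z \<Rightarrow> 'e \<Rightarrow> real) \<Rightarrow> ('z \<Rightarrow> 'z \<Rightarrow> 'e \<Rightarrow> real) \<Rightarrow>
    (real \<Rightarrow> 'z \<Rightarrow> real) \<Rightarrow> (real \<Rightarrow> 'z \<Rightarrow> real) \<Rightarrow> real \<Rightarrow> 'z \<Rightarrow> real" where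
  "Top P Pe \<beta> R Y du c w z =
     (THE \<xi>. 0 < \<xi> \<and> \<xi> \<le> w \<and>
        ennreal (du \<xi> z) =
          max (condE P Pe z (\<lambda>zh e. ennreal (\<beta> z zh e * R z zh e) *
                   mu du (cext c (R z zh e * (w - \<xi>) + Y z zh e) zh) zh))
              (ennreal (du w z)))"

definition spec_radius :: "('n::finite \<Rightarrow> 'n \<Rightarrow> real) \<Rightarrow> real" where
  "spec_radius A = Sup {cmod l | l. \<exists>v::'n \<Rightarrow> complex. (\<exists>j. v j \<noteq> 0) \<and>
       (\<forall>i. (\<Sum>j\<in>UNIV. complex_of_real (A i j) * v j) = l * v i)}"

definition K1 :: "('z::finite \<Rightarrow> 'z \<Rightarrow> real) \<Rightarrow> 'e measure \<Rightarrow>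
    ('z \<Rightarrow> 'z \<Rightarrow> 'e \<Rightarrow> real) \<Rightarrow> ('z \<Rightarrow> 'z \<Rightarrow> 'e \<Rightarrow> real) \<Rightarrow> 'z \<Rightarrow> 'z \<Rightarrow> real" where
  "K1 P Pe \<beta> R z zh = enn2real (ennreal (P z zh) * (\<integral>\<^sup>+ e. ennreal (\<beta> z zh e * R z zh e) \<partial>Pe))"

end

theory Submission
  imports Defs "HOL-Real_Asymp.Real_Asymp"
begin


locale cs =
  fixes P :: "'z::finite \<Rightarrow> 'z \<Rightarrow> real"
    and Pe :: "'e measure"
    and \<beta> R Y :: "'z \<Rightarrow> 'z \<Rightarrow> 'e \<Rightarrow> real"
    and du d2u :: "real \<Rightarrow> 'z \<Rightarrow> real"
    and c :: "real \<Rightarrow> 'z \<Rightarrow> real"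
  assumes P_nonneg: "\<And>z zh. 0 \<le> P z zh"
    and \<beta>_nonneg: "\<And>z zh e. 0 \<le> \<beta> z zh e"
    and R_nonneg: "\<And>z zh e. 0 \<le> R z zh e"
    and Y_nonneg: "\<And>z zh e. 0 \<le> Y z zh e"
    and \<beta>_meas: "\<And>z zh. (\<lambda>e. \<beta> z zh e) \<in> borel_measurable Pe"
    and R_meas: "\<And>z zh. (\<lambda>e. R z zh e) \<in> borel_measurable Pe"
    and Y_meas: "\<And>z zh. (\<lambda>e. Y z zh e) \<in> borel_measurable Pe"
    and du_deriv: "\<And>z c. 0 < c \<Longrightarrow> ((\<lambda>x. du x z) has_real_derivative d2u c z) (at c)"
    and du_pos: "\<And>z c. 0 < c \<Longrightarrow> 0 < du c z"
    and d2u_neg: "\<And>z c. 0 < c \<Longrightarrow> d2u c z < 0"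
    and du_zero: "\<And>z. filterlim (\<lambda>c. du c z) at_top (at_right 0)"
    and A2a2: "\<And>z. condE P Pe z (\<lambda>zh e. ennreal (\<beta> z zh e * R z zh e) * mu du (Y z zh e) zh) < \<infinity>"
    and K1_finite: "\<And>z zh. ennreal (P z zh) * (\<integral>\<^sup>+ e. ennreal (\<beta> z zh e * R z zh e) \<partial>Pe) < \<infinity>"
    and cC: "c \<in> classC du"
begin

lemma du_strict: "0 < a \<Longrightarrow> a < b \<Longrightarrow> du b z < du a z"
  by (rule DERIV_neg_imp_decreasing[of a b "\<lambda>x. du x z"]) (use du_deriv d2u_neg in \<open>meson less_le_trans\<close>)+

lemma du_le_iff: "0 < a \<Longrightarrow> 0 < b \<Longrightarrow> du a z \<le> du b z \<longleftrightarrow> b \<le> a"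
  using du_strict[of a b z] du_strict[of b a z] by (cases a b rule: linorder_cases) auto

lemma du_isCont: "0 < x \<Longrightarrow> isCont (\<lambda>x. du x z) x"
  using DERIV_isCont du_deriv by blast

lemma c_pos: "0 < w \<Longrightarrow> 0 < c w z" and c_le: "0 < w \<Longrightarrow> c w z \<le> w"
  using cC by (auto simp: classC_def)

lemma c_mono: "0 < x \<Longrightarrow> x \<le> y \<Longrightarrow> c x z \<le> c y z"
  using cC by (auto simp: classC_def mono_on_def)

lemma c_cont: "continuous_on {0<..} (\<lambda>w. c w z)"
  using cC by (auto simp: classC_def)

lemma c_bound: "\<exists>M\<ge>0. \<forall>w>0. \<forall>z. \<bar>du (c w z) z - du w z\<bar> \<le> M"
proof -
  obtain M where M: "\<forall>w>0. \<forall>z. \<bar>du (c w z) z - du w z\<bar> \<le> M" using cC unfolding classC_def by auto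
  then have "0 \<le> M" by (meson abs_ge_zero order_trans zero_less_one)
  with M show ?thesis by blast
qed

definition phi :: "real \<Rightarrow> 'z \<Rightarrow> ennreal" where
  "phi x zh = mu du (cext c x zh) zh"

lemma phi_alt: "phi x zh = (if 0 < x then ennreal (du (c x zh) zh) else \<infinity>)"
  using c_pos[of x zh] by (auto simp: phi_def mu_def cext_def)

lemma phi_anti: "x \<le> y \<Longrightarrow> phi y zh \<le> phi x zh"
proof -
  assume xy: "x \<le> y"
  show ?thesis
  proof (cases "0 < x")
    case True
    then have "c x zh \<le> c y zh" using c_mono xy by auto
    then have "du (c y zh) zh \<le> du (c x zh) zh"
      using du_le_iff[of "c y zh" "c x zh" zh] c_pos True xy by auto
    then show ?thesis using True xy by (auto simp: phi_alt intro: ennreal_leI)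
  next
    case False then show ?thesis by (auto simp: phi_alt)
  qed
qed

lemma phi_meas: "(\<lambda>x. phi x zh) \<in> borel_measurable borel"
proof -
  have "(\<lambda>x. if x \<in> {0<..} then ennreal (du (c x zh) zh) else \<infinity>) \<in> borel_measurable borel"
  proof (rule borel_measurable_continuous_on_if)
    show "continuous_on {0<..} (\<lambda>x. ennreal (du (c x zh) zh))"
      apply (rule continuous_on_ennreal)
      apply (rule continuous_on_compose2[OF _ c_cont, where t="{0<..}"])
       apply (rule continuous_at_imp_continuous_on) using du_isCont apply auto[1]
      using c_pos by auto
  qed auto
  then show ?thesis by (simp add: phi_alt[abs_def])
qed

lemma phi_cont: "continuous_on {0..} (\<lambda>x. phi x zh)"
proof (rule continuous_on_eq_continuous_within[THEN iffD2], intro ballI)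
  fix x0 :: real assume "x0 \<in> {0..}"
  then consider "0 < x0" | "x0 = 0" by fastforce
  then show "continuous (at x0 within {0..}) (\<lambda>x. phi x zh)"
  proof cases
    case 1
    have "isCont (\<lambda>x. c x zh) x0"
      using c_cont[of zh] 1 by (simp add: continuous_on_eq_continuous_at)
    then have "isCont ((\<lambda>x. du x zh) \<circ> (\<lambda>x. c x zh)) x0"
      using du_isCont[of "c x0 zh" zh] c_pos[OF 1] by (intro continuous_at_compose) auto
    then have "isCont (\<lambda>x. du (c x zh) zh) x0" by (simp add: o_def)
    then have "((\<lambda>x. ennreal (du (c x zh) zh)) \<longlongrightarrow> ennreal (du (c x0 zh) zh)) (at x0 within {0..})"
      by (intro tendsto_ennrealI) (use tendsto_within_subset[of _ _ x0 UNIV "{0..}"] in \<open>auto simp: isCont_def\<close>)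
    moreover have "eventually (\<lambda>x. ennreal (du (c x zh) zh) = phi x zh) (at x0 within {0..})"
      unfolding eventually_at using 1
      by (intro exI[of _ x0]) (auto simp: phi_alt dist_real_def)
    ultimately show ?thesis using 1
      by (simp add: continuous_within phi_alt) (rule tendsto_cong[THEN iffD1], assumption+)
  next
    case 2
    have "((\<lambda>x. phi x zh) \<longlongrightarrow> top) (at 0 within {0..})"
    proof (rule order_tendstoI)
      fix y :: ennreal assume "y < top"
      then obtain B where B: "y = ennreal B" "0 \<le> B" by (cases y) auto
      have "eventually (\<lambda>x. B < du x zh) (at_right 0)"
        using du_zero[of zh] by (simp add: filterlim_at_top_dense)
      then obtain b where b: "b > 0" "\<And>x. x > 0 \<Longrightarrow> x < b \<Longrightarrow> B < du x zh"
        unfolding eventually_at_right_field by auto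
      show "eventually (\<lambda>x. y < phi x zh) (at 0 within {0..})"
        unfolding eventually_at
      proof (intro exI[of _ b] conjI ballI impI)
        fix x :: real assume "x \<in> {0..}" "x \<noteq> 0 \<and> dist x 0 < b"
        then have x: "0 < x" "x < b" by auto
        then have "B < du (c x zh) zh" using b(2)[of "c x zh"] c_pos[of x zh] c_le[of x zh] by auto
        then show "y < phi x zh" using x B by (simp add: phi_alt ennreal_less_iff)
      qed (use b in auto)
    qed simp
    then show ?thesis using 2 by (simp add: continuous_within phi_alt)
  qed
qed

lemma phi_tendsto:
  assumes "\<And>n. 0 \<le> xs n" "xs \<longlonglongrightarrow> x0"
  shows "(\<lambda>n. phi (xs n) zh) \<longlonglongrightarrow> phi x0 zh"
proof -
  have "x0 \<ge> 0" using assms by (intro LIMSEQ_le_const) auto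
  then show ?thesis
    using continuous_on_tendsto_compose[OF phi_cont assms(2)] assms(1) by auto
qed

definition gi :: "'z \<Rightarrow> 'z \<Rightarrow> real \<Rightarrow> 'e \<Rightarrow> ennreal" where
  "gi z zh k e = ennreal (\<beta> z zh e * R z zh e) * phi (R z zh e * k + Y z zh e) zh"

definition G :: "'z \<Rightarrow> real \<Rightarrow> 'e \<Rightarrow> ennreal" where
  "G z k e = (\<Sum>zh\<in>UNIV. ennreal (P z zh) * gi z zh k e)"

definition H :: "'z \<Rightarrow> real \<Rightarrow> ennreal" where
  "H z k = condE P Pe z (\<lambda>zh. gi z zh k)"

lemma gi_meas[measurable]: "gi z zh k \<in> borel_measurable Pe"
proof -
  have [measurable]: "(\<lambda>x. phi x zh) \<in> borel_measurable borel" by (rule phi_meas)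
  note [measurable] = \<beta>_meas R_meas Y_meas
  show ?thesis unfolding gi_def[abs_def] by measurable
qed

lemma G_meas[measurable]: "G z k \<in> borel_measurable Pe"
  unfolding G_def[abs_def] by measurable

lemma H_eq: "H z k = (\<integral>\<^sup>+ e. G z k e \<partial>Pe)"
  unfolding H_def condE_def G_def
  by (subst nn_integral_sum) (auto simp: nn_integral_cmult)

lemma gi_anti: "k \<le> k' \<Longrightarrow> gi z zh k' e \<le> gi z zh k e"
  unfolding gi_def
  by (intro mult_left_mono phi_anti add_right_mono mult_left_mono) (auto simp: R_nonneg)

lemma G_anti: "k \<le> k' \<Longrightarrow> G z k' e \<le> G z k e"
  unfolding G_def by (intro sum_mono mult_left_mono gi_anti) auto

lemma H_anti: "k \<le> k' \<Longrightarrow> H z k' \<le> H z k"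
  unfolding H_eq by (intro nn_integral_mono G_anti)

lemma gi_tendsto:
  assumes "\<And>n. 0 \<le> ks n" "ks \<longlonglongrightarrow> k"
  shows "(\<lambda>n. gi z zh (ks n) e) \<longlonglongrightarrow> gi z zh k e"
  unfolding gi_def
proof (intro ennreal_tendsto_cmult phi_tendsto)
  show "(\<lambda>n. R z zh e * ks n + Y z zh e) \<longlonglongrightarrow> R z zh e * k + Y z zh e"
    by (intro tendsto_intros assms)
qed (use assms R_nonneg Y_nonneg in auto)

lemma G_tendsto:
  assumes "\<And>n. 0 \<le> ks n" "ks \<longlonglongrightarrow> k"
  shows "(\<lambda>n. G z (ks n) e) \<longlonglongrightarrow> G z k e"
  unfolding G_def
  by (intro tendsto_sum ennreal_tendsto_cmult gi_tendsto assms) auto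

lemma H_fatou:
  assumes "\<And>n. 0 \<le> ks n" "ks \<longlonglongrightarrow> k"
  shows "H z k \<le> liminf (\<lambda>n. H z (ks n))"
proof -
  have "H z k = (\<integral>\<^sup>+ e. liminf (\<lambda>n. G z (ks n) e) \<partial>Pe)"
    unfolding H_eq
    by (intro nn_integral_cong lim_imp_Liminf[symmetric] G_tendsto assms) auto
  also have "\<dots> \<le> liminf (\<lambda>n. H z (ks n))"
    unfolding H_eq by (rule nn_integral_liminf) simp
  finally show ?thesis .
qed

lemma mu_meas[measurable]: "(\<lambda>x. mu du x zh) \<in> borel_measurable borel"
proof -
  have "(\<lambda>x. if x \<in> {0<..} then ennreal (du x zh) else \<infinity>) \<in> borel_measurable borel"
  proof (rule borel_measurable_continuous_on_if)
    show "continuous_on {0<..} (\<lambda>x. ennreal (du x zh))"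
      apply (rule continuous_on_ennreal)
      apply (rule continuous_at_imp_continuous_on) using du_isCont by auto
  qed auto
  then show ?thesis by (simp add: mu_def[abs_def])
qed

lemma H0_fin: "H z 0 < \<infinity>"
proof -
  obtain M where M: "M \<ge> 0" "\<And>w z. w > 0 \<Longrightarrow> \<bar>du (c w z) z - du w z\<bar> \<le> M"
    using c_bound by blast
  note [measurable] = \<beta>_meas R_meas Y_meas
  have "ennreal (P z zh) * (\<integral>\<^sup>+ e. gi z zh 0 e \<partial>Pe) < \<infinity>" for zh
  proof -
    have pt: "gi z zh 0 e \<le> ennreal (\<beta> z zh e * R z zh e) * mu du (Y z zh e) zh
                + ennreal (\<beta> z zh e * R z zh e) * ennreal M" for e
    proof -
      have "phi (Y z zh e) zh \<le> mu du (Y z zh e) zh + ennreal M"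
      proof (cases "0 < Y z zh e")
        case True
        let ?y = "Y z zh e"
        have "du (c ?y zh) zh \<le> du ?y zh + M" using M(2)[OF True, of zh] by linarith
        then have "ennreal (du (c ?y zh) zh) \<le> ennreal (du ?y zh + M)" by (rule ennreal_leI)
        also have "\<dots> = ennreal (du ?y zh) + ennreal M"
          using du_pos[OF True, of zh] M(1) by (simp add: ennreal_plus)
        finally show ?thesis using True by (simp add: phi_alt mu_def)
      qed (simp add: phi_alt mu_def)
      then show ?thesis unfolding gi_def by (simp add: distrib_left[symmetric] mult_left_mono)
    qed
    have "(\<integral>\<^sup>+ e. gi z zh 0 e \<partial>Pe) \<le> (\<integral>\<^sup>+ e. ennreal (\<beta> z zh e * R z zh e) * mu du (Y z zh e) zh
                + ennreal (\<beta> z zh e * R z zh e) * ennreal M \<partial>Pe)"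
      by (intro nn_integral_mono pt)
    also have "\<dots> = (\<integral>\<^sup>+ e. ennreal (\<beta> z zh e * R z zh e) * mu du (Y z zh e) zh \<partial>Pe)
                + (\<integral>\<^sup>+ e. ennreal (\<beta> z zh e * R z zh e) \<partial>Pe) * ennreal M"
      by (subst nn_integral_add) (auto simp: nn_integral_multc)
    finally have le: "ennreal (P z zh) * (\<integral>\<^sup>+ e. gi z zh 0 e \<partial>Pe) \<le>
        ennreal (P z zh) * (\<integral>\<^sup>+ e. ennreal (\<beta> z zh e * R z zh e) * mu du (Y z zh e) zh \<partial>Pe)
        + (ennreal (P z zh) * (\<integral>\<^sup>+ e. ennreal (\<beta> z zh e * R z zh e) \<partial>Pe)) * ennreal M"
      by (subst mult.assoc, subst distrib_left[symmetric]) (rule mult_left_mono, auto)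
    have f1: "ennreal (P z zh) * (\<integral>\<^sup>+ e. ennreal (\<beta> z zh e * R z zh e) * mu du (Y z zh e) zh \<partial>Pe) < \<infinity>"
      using A2a2[of z] unfolding condE_def by (simp add: top.not_eq_extremum)
    have f2: "(ennreal (P z zh) * (\<integral>\<^sup>+ e. ennreal (\<beta> z zh e * R z zh e) \<partial>Pe)) * ennreal M < \<infinity>"
      using K1_finite[of z zh] by (simp add: ennreal_mult_less_top)
    show ?thesis using le f1 f2 by (simp add: order_le_less_trans)
  qed
  then show ?thesis unfolding H_def condE_def by simp
qed

lemma H_right:
  assumes "\<And>n. 0 \<le> ks n" "ks \<longlonglongrightarrow> k" "incseq ks"
  shows "(\<lambda>n. H z (ks n)) \<longlonglongrightarrow> H z k"
proof -
  have dG: "decseq (\<lambda>n. G z (ks n))"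
    using assms(3) unfolding decseq_def incseq_def monotone_def le_fun_def by (auto intro: G_anti)
  have dGe: "decseq (\<lambda>n. G z (ks n) e)" for e
    using assms(3) by (auto simp: decseq_def incseq_def intro: G_anti)
  have dH: "decseq (\<lambda>n. H z (ks n))"
    using assms(3) by (auto simp: decseq_def incseq_def intro: H_anti)
  have fin: "(\<integral>\<^sup>+ e. G z (ks n) e \<partial>Pe) < \<infinity>" for n
    using H_anti[of 0 "ks n" z] assms(1)[of n] H0_fin[of z] by (simp add: H_eq[symmetric])
  have "(\<integral>\<^sup>+ e. (INF n. G z (ks n) e) \<partial>Pe) = (INF n. H z (ks n))"
    unfolding H_eq by (rule nn_integral_monotone_convergence_INF_decseq[OF dG]) (use fin in auto)
  moreover have "(INF n. G z (ks n) e) = G z k e" for e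
    using LIMSEQ_INF[OF dGe[of e]] G_tendsto[OF assms(1,2), of z e] LIMSEQ_unique by blast
  ultimately have "H z k = (INF n. H z (ks n))" by (simp add: H_eq)
  then show ?thesis using LIMSEQ_INF[OF dH] by simp
qed

definition EQ :: "'z \<Rightarrow> real \<Rightarrow> real \<Rightarrow> bool" where
  "EQ z w \<xi> \<longleftrightarrow> 0 < \<xi> \<and> \<xi> \<le> w \<and> ennreal (du \<xi> z) = max (H z (w - \<xi>)) (ennreal (du w z))"

lemma EQ_unique: assumes "EQ z w a" "EQ z w b" shows "a = b"
proof (rule ccontr)
  assume "a \<noteq> b"
  then consider "a < b" | "b < a" by linarith
  then show False
  proof cases
    case 1
    have "max (H z (w - a)) (ennreal (du w z)) \<le> max (H z (w - b)) (ennreal (du w z))"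
      using H_anti[of "w - b" "w - a" z] 1 by (intro max.mono) auto
    then have "ennreal (du a z) \<le> ennreal (du b z)" using assms by (simp add: EQ_def)
    then have "du a z \<le> du b z" using du_pos[of b z] assms ennreal_le_iff less_imp_le unfolding EQ_def by metis
    then show False using du_strict[of a b z] 1 assms by (simp add: EQ_def)
  next
    case 2
    have "max (H z (w - b)) (ennreal (du w z)) \<le> max (H z (w - a)) (ennreal (du w z))"
      using H_anti[of "w - a" "w - b" z] 2 by (intro max.mono) auto
    then have "ennreal (du b z) \<le> ennreal (du a z)" using assms by (simp add: EQ_def)
    then have "du b z \<le> du a z" using du_pos[of a z] assms ennreal_le_iff less_imp_le unfolding EQ_def by metis
    then show False using du_strict[of b a z] 2 assms by (simp add: EQ_def)
  qed
qed

lemma seq1: "0 < s \<Longrightarrow> (\<lambda>n. s - s / (real n + 2)) \<longlonglongrightarrow> s"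
  by real_asymp

lemma seq2: "(\<lambda>n. s + d / (real n + 2)) \<longlonglongrightarrow> (s::real)"
  by real_asymp

lemma EQ_exists:
  assumes w: "0 < w" shows "\<exists>\<xi>. EQ z w \<xi>"
proof -
  define A where "A = {\<xi>. 0 < \<xi> \<and> \<xi> \<le> w \<and> H z (w - \<xi>) < ennreal (du \<xi> z)}"
  obtain B where B: "H z 0 = ennreal B" "0 \<le> B" using H0_fin[of z] by (cases "H z 0") auto
  have "eventually (\<lambda>x. B < du x z) (at_right 0)"
    using du_zero[of z] by (simp add: filterlim_at_top_dense)
  then obtain b where b: "b > 0" "\<And>x. x > 0 \<Longrightarrow> x < b \<Longrightarrow> B < du x z"
    unfolding eventually_at_right_field by auto
  define x0 where "x0 = min (b/2) w"
  have x0: "0 < x0" "x0 \<le> w" "x0 < b" using b w by (auto simp: x0_def)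
  have "x0 \<in> A"
  proof -
    have "H z (w - x0) \<le> H z 0" using x0 by (intro H_anti) auto
    also have "\<dots> < ennreal (du x0 z)" using B b(2)[OF x0(1,3)] by (simp add: ennreal_less_iff)
    finally show ?thesis using x0 by (auto simp: A_def)
  qed
  have down: "a \<in> A \<Longrightarrow> 0 < a' \<Longrightarrow> a' \<le> a \<Longrightarrow> a' \<in> A" for a a'
  proof -
    assume a: "a \<in> A" "0 < a'" "a' \<le> a"
    have "H z (w - a') \<le> H z (w - a)" using a by (intro H_anti) auto
    also have "\<dots> < ennreal (du a z)" using a by (auto simp: A_def)
    also have "\<dots> \<le> ennreal (du a' z)"
      using a du_le_iff[of a' a z] by (auto simp: A_def intro: ennreal_leI)
    finally show ?thesis using a by (auto simp: A_def)
  qed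
  have bdd: "bdd_above A" by (auto simp: A_def bdd_above_def)
  define s where "s = Sup A"
  have s0: "x0 \<le> s" unfolding s_def using \<open>x0 \<in> A\<close> bdd by (rule cSup_upper)
  have sw: "s \<le> w" unfolding s_def using \<open>x0 \<in> A\<close> by (intro cSup_least) (auto simp: A_def)
  have spos: "0 < s" using s0 x0 by linarith
  have dus: "isCont (\<lambda>x. du x z) s" using du_isCont spos by auto
  define ls where "ls n = s - s / (real n + 2)" for n
  have ls: "0 < ls n" "ls n < s" for n using spos
    by (auto simp: ls_def field_simps intro: add_pos_nonneg)
  have lsA: "ls n \<in> A" for n
  proof -
    obtain a where "a \<in> A" "ls n < a" using less_cSup_iff[of A "ls n"] \<open>x0 \<in> A\<close> bdd ls(2)[of n]
      unfolding s_def by auto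
    then show ?thesis using down ls(1)[of n] by auto
  qed
  have lsl: "ls \<longlonglongrightarrow> s" unfolding ls_def using spos by (rule seq1)
  have left: "H z (w - s) \<le> ennreal (du s z)"
  proof -
    have "H z (w - s) \<le> liminf (\<lambda>n. H z (w - ls n))"
      using lsA by (intro H_fatou tendsto_intros lsl) (auto simp: A_def)
    also have "\<dots> \<le> liminf (\<lambda>n. ennreal (du (ls n) z))"
      using lsA by (intro Liminf_mono always_eventually) (auto simp: A_def less_imp_le)
    also have "\<dots> = ennreal (du s z)"
      by (intro lim_imp_Liminf tendsto_ennrealI isCont_tendsto_compose[OF dus lsl]) auto
    finally show ?thesis .
  qed
  have right: "ennreal (du s z) \<le> H z (w - s)" if sw': "s < w"
  proof -
    define rs where "rs n = s + (w - s) / (real n + 2)" for n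
    have rs: "s < rs n" "rs n < w" for n
    proof -
      have "(w - s) / (real n + 2) < (w - s) / 1" using sw' by (intro divide_strict_left_mono) auto
      moreover have "0 < (w - s) / (real n + 2)" using sw' by auto
      ultimately show "s < rs n" "rs n < w" by (auto simp: rs_def)
    qed
    have rsA: "rs n \<notin> A" for n
      using cSup_upper[OF _ bdd, of "rs n"] rs(1)[of n] unfolding s_def by auto
    have rsl: "rs \<longlonglongrightarrow> s" unfolding rs_def by (rule seq2)
    have le: "ennreal (du (rs n) z) \<le> H z (w - rs n)" for n
      using rsA[of n] rs[of n] spos by (auto simp: A_def not_less)
    have inc: "incseq (\<lambda>n. w - rs n)"
      unfolding incseq_def rs_def using sw'
      by (auto intro!: divide_left_mono diff_mono)
    have "(\<lambda>n. H z (w - rs n)) \<longlonglongrightarrow> H z (w - s)"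
      using rs by (intro H_right tendsto_intros rsl inc) (auto simp: less_imp_le)
    moreover have "(\<lambda>n. ennreal (du (rs n) z)) \<longlonglongrightarrow> ennreal (du s z)"
      by (intro tendsto_ennrealI isCont_tendsto_compose[OF dus rsl])
    ultimately show ?thesis using le by (intro LIMSEQ_le) auto
  qed
  have "EQ z w s"
  proof (cases "s = w")
    case True
    then show ?thesis using left spos by (auto simp: EQ_def max_def)
  next
    case False
    then have "s < w" using sw by auto
    then have e: "H z (w - s) = ennreal (du s z)" using left right by (auto intro: antisym)
    have "du w z \<le> du s z" using du_le_iff[of w s z] spos sw by auto
    then have "ennreal (du w z) \<le> ennreal (du s z)" by (rule ennreal_leI)
    then show ?thesis using e spos sw by (auto simp: EQ_def max_def)
  qed
  then show ?thesis by blast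
qed

lemma Top_EQ:
  assumes w: "0 < w" shows "EQ z w (Top P Pe \<beta> R Y du c w z)"
proof -
  have eq: "Top P Pe \<beta> R Y du c w z = (THE \<xi>. EQ z w \<xi>)"
    unfolding Top_def EQ_def H_def gi_def phi_def by simp
  have "\<exists>!\<xi>. EQ z w \<xi>" using EQ_exists[OF w] EQ_unique by blast
  then show ?thesis unfolding eq by (rule theI')
qed

lemma main:
  assumes fx: "\<And>w z. 0 < w \<Longrightarrow> Top P Pe \<beta> R Y du c w z = c w z"
  shows "mono_on {0<..} (\<lambda>w. w - c w z)"
proof (rule mono_onI)
  fix w1 w2 :: real assume "w1 \<in> {0<..}" "w2 \<in> {0<..}" "w1 \<le> w2"
  then have w: "0 < w1" "0 < w2" "w1 \<le> w2" by auto
  have e1: "EQ z w1 (c w1 z)" using Top_EQ[OF w(1), of z] fx[OF w(1)] by simp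
  have e2: "EQ z w2 (c w2 z)" using Top_EQ[OF w(2), of z] fx[OF w(2)] by simp
  show "w1 - c w1 z \<le> w2 - c w2 z"
  proof (rule ccontr)
    assume "\<not> ?thesis"
    then have lt: "w2 - c w2 z < w1 - c w1 z" by simp
    then have cl: "c w1 z < c w2 z" using w by linarith
    have p1: "0 < c w1 z" "c w1 z \<le> w1" and p2: "0 < c w2 z" "c w2 z \<le> w2"
      using e1 e2 by (auto simp: EQ_def)
    show False
    proof (cases "H z (w1 - c w1 z) \<le> ennreal (du w1 z)")
      case True
      then have "ennreal (du (c w1 z) z) = ennreal (du w1 z)" using e1 by (simp add: EQ_def max_def)
      then have "du (c w1 z) z = du w1 z" using du_pos[OF p1(1), of z] du_pos[OF w(1), of z] by simp
      then have "c w1 z = w1" using du_le_iff[of "c w1 z" w1 z] du_le_iff[of w1 "c w1 z" z] p1 w by auto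
      then show False using lt p2 by linarith
    next
      case False
      then have "ennreal (du (c w1 z) z) = H z (w1 - c w1 z)" using e1 by (simp add: EQ_def max_def)
      also have "\<dots> \<le> H z (w2 - c w2 z)" using lt by (intro H_anti) auto
      also have "\<dots> \<le> ennreal (du (c w2 z) z)" using e2 by (simp add: EQ_def)
      finally have "du (c w1 z) z \<le> du (c w2 z) z" using du_pos[OF p2(1), of z] by (simp add: ennreal_le_iff)
      then show False using du_le_iff[of "c w1 z" "c w2 z" z] p1 p2 cl by auto
    qed
  qed
qed

end


theorem proposition2p2:
  fixes P :: "'z::finite \<Rightarrow> 'z \<Rightarrow> real"
    and Pe :: "'e measure"
    and \<beta> R Y :: "'z \<Rightarrow> 'z \<Rightarrow> 'e \<Rightarrow> real"
    and u du d2u :: "real \<Rightarrow> 'z \<Rightarrow> real"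
    and cstar :: "real \<Rightarrow> 'z \<Rightarrow> real"
  assumes P_nonneg: "\<And>z zh. 0 \<le> P z zh"
    and P_stoch: "\<And>z. (\<Sum>zh\<in>UNIV. P z zh) = 1"
    and pi_prob: "prob_space Pe"
    and \<beta>_nonneg: "\<And>z zh e. 0 \<le> \<beta> z zh e"
    and R_nonneg: "\<And>z zh e. 0 \<le> R z zh e"
    and Y_nonneg: "\<And>z zh e. 0 \<le> Y z zh e"
    and \<beta>_meas: "\<And>z zh. (\<lambda>e. \<beta> z zh e) \<in> borel_measurable Pe"
    and R_meas: "\<And>z zh. (\<lambda>e. R z zh e) \<in> borel_measurable Pe"
    and Y_meas: "\<And>z zh. (\<lambda>e. Y z zh e) \<in> borel_measurable Pe"
    \<comment> \<open>Assumption 1\<close>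
    and u_deriv: "\<And>z c. 0 < c \<Longrightarrow> ((\<lambda>x. u x z) has_real_derivative du c z) (at c)"
    and du_deriv: "\<And>z c. 0 < c \<Longrightarrow> ((\<lambda>x. du x z) has_real_derivative d2u c z) (at c)"
    and du_pos: "\<And>z c. 0 < c \<Longrightarrow> 0 < du c z"
    and d2u_neg: "\<And>z c. 0 < c \<Longrightarrow> d2u c z < 0"
    and du_zero: "\<And>z. filterlim (\<lambda>c. du c z) at_top (at_right 0)"
    and du_infty: "\<And>z. \<exists>L. ((\<lambda>c. du c z) \<longlongrightarrow> L) at_top \<and> L < 1"
    \<comment> \<open>Assumption 2(a)\<close>
    and A2a1: "\<And>z. condE P Pe z (\<lambda>zh e. mu du (Y z zh e) zh) < \<infinity>"
    and A2a2: "\<And>z. condE P Pe z (\<lambda>zh e. ennreal (\<beta> z zh e * R z zh e) * mu du (Y z zh e) zh) < \<infinity>"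
    \<comment> \<open>K(1) is a (finite) real matrix, and Assumption 2(b)\<close>
    and K1_finite: "\<And>z zh. ennreal (P z zh) * (\<integral>\<^sup>+ e. ennreal (\<beta> z zh e * R z zh e) \<partial>Pe) < \<infinity>"
    and A2b: "spec_radius (K1 P Pe \<beta> R) < 1"
    \<comment> \<open>c* is the optimal consumption function: the fixed point of T in C\<close>
    and cstar_C: "cstar \<in> classC du"
    and cstar_fix: "\<And>w z. 0 < w \<Longrightarrow> Top P Pe \<beta> R Y du cstar w z = cstar w z"
  shows "\<forall>z. mono_on {0<..} (\<lambda>w. cstar w z) \<and> mono_on {0<..} (\<lambda>w. w - cstar w z)"
proof -
  interpret cs P Pe \<beta> R Y du d2u cstar
    by (unfold_locales) (use assms in auto)
  show ?thesis
  proof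
    fix z
    show "mono_on {0<..} (\<lambda>w. cstar w z) \<and> mono_on {0<..} (\<lambda>w. w - cstar w z)"
      using cstar_C main[OF cstar_fix] by (auto simp: classC_def)
  qed
qed

end
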